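(* Let $\mathcal{P}=((\mathcal{S},\mathcal{T}),(\mathcal{U},\mathcal{V}))$ be a twin cotorsion pair on a triangulated category $\mathcal{C}$ with associated functor $H\colon\mathcal{C}\to\mathcal{H}/\mathcal{W}$. For any $C\in\mathcal{C}$ the following are equivalent: (1) $H(C)=0$; (2) $\tau^-(C)$ is isomorphic in $\mathcal{C}/\mathcal{W}$ to an object of $\mathcal{U}$; (3) $\tau^+(C)$ is isomorphic in $\mathcal{C}/\mathcal{W}$ to an object of $\mathcal{T}$.
   Context: For full subcategories $\mathcal{X},\mathcal{Y}$, $\mathcal{X}*\mathcal{Y}$ is the full subcategory of objects $C$ admitting a distinguished triangle $X\to C\to Y\to X[1]$ with $X\in\mathcal{X}$, $Y\in\mathcal{Y}$. A cotorsion pair $(\mathcal{A},\mathcal{B})$: full subcategories closed under isomorphisms, finite direct sums and summands with $\mathcal{C}=\mathcal{A}*\mathcal{B}[1]$ and $\mathcal{C}(\mathcal{A},\mathcal{B}[1])=0$. A twin cotorsion pair $((\mathcal{S},\mathcal{T}),(\mathcal{U},\mathcal{V}))$: two cotorsion pairs with $\mathcal{C}(\mathcal{S},\mathcal{V}[1])=0$. Associated data: $\mathcal{W}=\mathcal{U}\cap\mathcal{T}$, $\mathcal{C}^+=\mathcal{W}*\mathcal{V}[1]$, $\mathcal{C}^-=\mathcal{S}[-1]*\mathcal{W}$, $\mathcal{H}=\mathcal{C}^+\cap\mathcal{C}^-$; ideal quotients $\mathcal{C}/\mathcal{W}$, $\mathcal{H}/\mathcal{W}$ by morphisms factoring through objects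 of $\mathcal{W}$; $\tau^+$ left adjoint of $\mathcal{C}^+/\mathcal{W}\hookrightarrow\mathcal{C}/\mathcal{W}$, $\tau^-$ right adjoint of $\mathcal{C}^-/\mathcal{W}\hookrightarrow\mathcal{C}/\mathcal{W}$ (values of $\tau^\pm$ regarded in $\mathcal{C}/\mathcal{W}$); $H$ is the quotient functor $\mathcal{C}\to\mathcal{C}/\mathcal{W}$ followed by $\tau^+\tau^-$. *)

theory Defs
  imports Main
begin

text \<open>All elements of type 'o are objects.  hom X Y is the set of morphisms X to Y;
cmp g f is the composite g after f.\<close>

record ('o, 'm) tricat =
  hom   :: "'o \<Rightarrow> 'o \<Rightarrow> 'm set"
  cmp   :: "'m \<Rightarrow> 'm \<Rightarrow> 'm"
  idm   :: "'o \<Rightarrow> 'm"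
  madd  :: "'m \<Rightarrow> 'm \<Rightarrow> 'm"
  mneg  :: "'m \<Rightarrow> 'm"
  mzero :: "'o \<Rightarrow> 'o \<Rightarrow> 'm"
  shO   :: "'o \<Rightarrow> 'o"
  shM   :: "'m \<Rightarrow> 'm"
  dtri  :: "'o \<Rightarrow> 'o \<Rightarrow> 'o \<Rightarrow> 'm \<Rightarrow> 'm \<Rightarrow> 'm \<Rightarrow> bool"

definition category :: "('o, 'm) tricat \<Rightarrow> bool" where
  "category C \<longleftrightarrow>
     (\<forall>X. idm C X \<in> hom C X X) \<and>
     (\<forall>X Y Z f g. f \<in> hom C X Y \<longrightarrow> g \<in> hom C Y Z \<longrightarrow> cmp C g f \<in> hom C X Z) \<and>
     (\<forall>X Y Z W f g h. f \<in> hom C X Y \<longrightarrow> g \<in> hom C Y Z \<longrightarrow> h \<in> hom C Z W \<longrightarrow>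
        cmp C h (cmp C g f) = cmp C (cmp C h g) f) \<and>
     (\<forall>X Y f. f \<in> hom C X Y \<longrightarrow> cmp C f (idm C X) = f \<and> cmp C (idm C Y) f = f)"

definition preadditive :: "('o, 'm) tricat \<Rightarrow> bool" where
  "preadditive C \<longleftrightarrow> category C \<and>
     (\<forall>X Y. mzero C X Y \<in> hom C X Y \<and>
        (\<forall>f\<in>hom C X Y. \<forall>g\<in>hom C X Y. madd C f g \<in> hom C X Y) \<and>
        (\<forall>f\<in>hom C X Y. mneg C f \<in> hom C X Y) \<and>
        (\<forall>f\<in>hom C X Y. \<forall>g\<in>hom C X Y. \<forall>h\<in>hom C X Y.
            madd C (madd C f g) h = madd C f (madd C g h)) \<and>
        (\<forall>f\<in>hom C X Y. \<forall>g\<in>hom C X Y. madd C f g = madd C g f) \<and>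
        (\<forall>f\<in>hom C X Y. madd C (mzero C X Y) f = f) \<and>
        (\<forall>f\<in>hom C X Y. madd C (mneg C f) f = mzero C X Y)) \<and>
     (\<forall>X Y Z f1 f2 g. f1 \<in> hom C X Y \<longrightarrow> f2 \<in> hom C X Y \<longrightarrow> g \<in> hom C Y Z \<longrightarrow>
        cmp C g (madd C f1 f2) = madd C (cmp C g f1) (cmp C g f2)) \<and>
     (\<forall>X Y Z f g1 g2. f \<in> hom C X Y \<longrightarrow> g1 \<in> hom C Y Z \<longrightarrow> g2 \<in> hom C Y Z \<longrightarrow>
        cmp C (madd C g1 g2) f = madd C (cmp C g1 f) (cmp C g2 f))"

definition zero_obj :: "('o, 'm) tricat \<Rightarrow> 'o \<Rightarrow> bool" where
  "zero_obj C Z \<longleftrightarrow> idm C Z = mzero C Z Z"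

definition is_biproduct :: "('o, 'm) tricat \<Rightarrow> 'o \<Rightarrow> 'o \<Rightarrow> 'o \<Rightarrow> bool" where
  "is_biproduct C X Y B \<longleftrightarrow>
     (\<exists>i1\<in>hom C X B. \<exists>i2\<in>hom C Y B. \<exists>p1\<in>hom C B X. \<exists>p2\<in>hom C B Y.
        cmp C p1 i1 = idm C X \<and> cmp C p2 i2 = idm C Y \<and>
        cmp C p2 i1 = mzero C X Y \<and> cmp C p1 i2 = mzero C Y X \<and>
        madd C (cmp C i1 p1) (cmp C i2 p2) = idm C B)"

definition additive :: "('o, 'm) tricat \<Rightarrow> bool" where
  "additive C \<longleftrightarrow> preadditive C \<and> (\<exists>Z. zero_obj C Z) \<and>
     (\<forall>X Y. \<exists>B. is_biproduct C X Y B)"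

definition isomorphism :: "('o, 'm) tricat \<Rightarrow> 'o \<Rightarrow> 'o \<Rightarrow> 'm \<Rightarrow> bool" where
  "isomorphism C X Y f \<longleftrightarrow> f \<in> hom C X Y \<and>
     (\<exists>g\<in>hom C Y X. cmp C g f = idm C X \<and> cmp C f g = idm C Y)"

definition iso :: "('o, 'm) tricat \<Rightarrow> 'o \<Rightarrow> 'o \<Rightarrow> bool" where
  "iso C X Y \<longleftrightarrow> (\<exists>f. isomorphism C X Y f)"

definition triangulated :: "('o, 'm) tricat \<Rightarrow> bool" where
  "triangulated C \<longleftrightarrow> additive C \<and>
     \<comment> \<open>the shift is an additive automorphism\<close>
     (\<forall>X Y f. f \<in> hom C X Y \<longrightarrow> shM C f \<in> hom C (shO C X) (shO C Y)) \<and>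
     (\<forall>X. shM C (idm C X) = idm C (shO C X)) \<and>
     (\<forall>X Y Z f g. f \<in> hom C X Y \<longrightarrow> g \<in> hom C Y Z \<longrightarrow>
        shM C (cmp C g f) = cmp C (shM C g) (shM C f)) \<and>
     (\<forall>X Y f g. f \<in> hom C X Y \<longrightarrow> g \<in> hom C X Y \<longrightarrow>
        shM C (madd C f g) = madd C (shM C f) (shM C g)) \<and>
     bij (shO C) \<and>
     (\<forall>X Y. bij_betw (shM C) (hom C X Y) (hom C (shO C X) (shO C Y))) \<and>
     \<comment> \<open>triangles are typed\<close>
     (\<forall>X Y Z f g h. dtri C X Y Z f g h \<longrightarrow>
        f \<in> hom C X Y \<and> g \<in> hom C Y Z \<and> h \<in> hom C Z (shO C X)) \<and>
     \<comment> \<open>TR1: closure under isomorphism of triangles\<close>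
     (\<forall>X Y Z f g h X' Y' Z' f' g' h' a b c.
        dtri C X Y Z f g h \<longrightarrow>
        f' \<in> hom C X' Y' \<longrightarrow> g' \<in> hom C Y' Z' \<longrightarrow> h' \<in> hom C Z' (shO C X') \<longrightarrow>
        isomorphism C X X' a \<longrightarrow> isomorphism C Y Y' b \<longrightarrow> isomorphism C Z Z' c \<longrightarrow>
        cmp C b f = cmp C f' a \<longrightarrow> cmp C c g = cmp C g' b \<longrightarrow>
        cmp C (shM C a) h = cmp C h' c \<longrightarrow>
        dtri C X' Y' Z' f' g' h') \<and>
     \<comment> \<open>TR1: X --id--> X --> 0 --> X[1] is distinguished\<close>
     (\<forall>X Z. zero_obj C Z \<longrightarrow>
        dtri C X X Z (idm C X) (mzero C X Z) (mzero C Z (shO C X))) \<and>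
     \<comment> \<open>TR1: every morphism embeds in a distinguished triangle\<close>
     (\<forall>X Y f. f \<in> hom C X Y \<longrightarrow> (\<exists>Z g h. dtri C X Y Z f g h)) \<and>
     \<comment> \<open>TR2: rotation\<close>
     (\<forall>X Y Z f g h. f \<in> hom C X Y \<longrightarrow> g \<in> hom C Y Z \<longrightarrow> h \<in> hom C Z (shO C X) \<longrightarrow>
        (dtri C X Y Z f g h \<longleftrightarrow> dtri C Y Z (shO C X) g h (mneg C (shM C f)))) \<and>
     \<comment> \<open>TR3: completion of morphisms of triangles\<close>
     (\<forall>X Y Z f g h X' Y' Z' f' g' h' a b.
        dtri C X Y Z f g h \<longrightarrow> dtri C X' Y' Z' f' g' h' \<longrightarrow>
        a \<in> hom C X X' \<longrightarrow> b \<in> hom C Y Y' \<longrightarrow> cmp C b f = cmp C f' a \<longrightarrow>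
        (\<exists>c\<in>hom C Z Z'. cmp C c g = cmp C g' b \<and> cmp C h' c = cmp C (shM C a) h)) \<and>
     \<comment> \<open>TR4: octahedral axiom\<close>
     (\<forall>X Y Z f g Z' u u' X' v v' Y' w w'.
        f \<in> hom C X Y \<longrightarrow> g \<in> hom C Y Z \<longrightarrow>
        dtri C X Y Z' f u u' \<longrightarrow> dtri C Y Z X' g v v' \<longrightarrow>
        dtri C X Z Y' (cmp C g f) w w' \<longrightarrow>
        (\<exists>a\<in>hom C Z' Y'. \<exists>b\<in>hom C Y' X'.
           dtri C Z' Y' X' a b (cmp C (shM C u) v') \<and>
           cmp C a u = cmp C w g \<and> cmp C w' a = u' \<and>
           cmp C b w = v \<and> cmp C v' b = cmp C (shM C f) w'))"

text \<open>Full subcategories are given by their classes of objects.\<close>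

definition closed_subcat :: "('o, 'm) tricat \<Rightarrow> 'o set \<Rightarrow> bool" where
  "closed_subcat C A \<longleftrightarrow>
     (\<forall>X Y. X \<in> A \<longrightarrow> iso C X Y \<longrightarrow> Y \<in> A) \<and>
     (\<forall>Z. zero_obj C Z \<longrightarrow> Z \<in> A) \<and>
     (\<forall>X Y B. X \<in> A \<longrightarrow> Y \<in> A \<longrightarrow> is_biproduct C X Y B \<longrightarrow> B \<in> A) \<and>
     (\<forall>X Y B. B \<in> A \<longrightarrow> is_biproduct C X Y B \<longrightarrow> X \<in> A \<and> Y \<in> A)"

definition star :: "('o, 'm) tricat \<Rightarrow> 'o set \<Rightarrow> 'o set \<Rightarrow> 'o set" where
  "star C A B = {E. \<exists>X\<in>A. \<exists>Y\<in>B. \<exists>f g h. dtri C X E Y f g h}"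

definition shift_up :: "('o, 'm) tricat \<Rightarrow> 'o set \<Rightarrow> 'o set" where
  "shift_up C A = shO C ` A"

definition shift_down :: "('o, 'm) tricat \<Rightarrow> 'o set \<Rightarrow> 'o set" where
  "shift_down C A = {X. shO C X \<in> A}"

definition hom_vanish :: "('o, 'm) tricat \<Rightarrow> 'o set \<Rightarrow> 'o set \<Rightarrow> bool" where
  "hom_vanish C A B \<longleftrightarrow> (\<forall>X\<in>A. \<forall>Y\<in>B. \<forall>f\<in>hom C X Y. f = mzero C X Y)"

definition cotorsion_pair :: "('o, 'm) tricat \<Rightarrow> 'o set \<Rightarrow> 'o set \<Rightarrow> bool" where
  "cotorsion_pair C A B \<longleftrightarrow> closed_subcat C A \<and> closed_subcat C B \<and>
     star C A (shift_up C B) = UNIV \<and> hom_vanish C A (shift_up C B)"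

definition twin_cotorsion_pair ::
  "('o, 'm) tricat \<Rightarrow> 'o set \<Rightarrow> 'o set \<Rightarrow> 'o set \<Rightarrow> 'o set \<Rightarrow> bool" where
  "twin_cotorsion_pair C S T U V \<longleftrightarrow> cotorsion_pair C S T \<and> cotorsion_pair C U V \<and>
     hom_vanish C S (shift_up C V)"

definition Wcl :: "'o set \<Rightarrow> 'o set \<Rightarrow> 'o set \<Rightarrow> 'o set \<Rightarrow> 'o set" where
  "Wcl S T U V = U \<inter> T"

definition Cplus :: "('o, 'm) tricat \<Rightarrow> 'o set \<Rightarrow> 'o set \<Rightarrow> 'o set \<Rightarrow> 'o set \<Rightarrow> 'o set" where
  "Cplus C S T U V = star C (Wcl S T U V) (shift_up C V)"

definition Cminus :: "('o, 'm) tricat \<Rightarrow> 'o set \<Rightarrow> 'o set \<Rightarrow> 'o set \<Rightarrow> 'o set \<Rightarrow> 'o set" where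
  "Cminus C S T U V = star C (shift_down C S) (Wcl S T U V)"

definition factors_through :: "('o, 'm) tricat \<Rightarrow> 'o set \<Rightarrow> 'o \<Rightarrow> 'o \<Rightarrow> 'm \<Rightarrow> bool" where
  "factors_through C W X Y f \<longleftrightarrow>
     (\<exists>Z\<in>W. \<exists>g\<in>hom C X Z. \<exists>h\<in>hom C Z Y. f = cmp C h g)"

text \<open>equality of morphisms X to Y in C/W\<close>
definition eqW :: "('o, 'm) tricat \<Rightarrow> 'o set \<Rightarrow> 'o \<Rightarrow> 'o \<Rightarrow> 'm \<Rightarrow> 'm \<Rightarrow> bool" where
  "eqW C W X Y f g \<longleftrightarrow> factors_through C W X Y (madd C f (mneg C g))"

definition isoW :: "('o, 'm) tricat \<Rightarrow> 'o set \<Rightarrow> 'o \<Rightarrow> 'o \<Rightarrow> bool" where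
  "isoW C W X Y \<longleftrightarrow> (\<exists>f\<in>hom C X Y. \<exists>g\<in>hom C Y X.
     eqW C W X X (cmp C g f) (idm C X) \<and> eqW C W Y Y (cmp C f g) (idm C Y))"

text \<open>(R, eta) is a reflection of X into D/W inside C/W, i.e. the unit at X of a
left adjoint to the inclusion D/W into C/W: R = tau^+(X) when D = C^+.\<close>
definition reflection ::
  "('o, 'm) tricat \<Rightarrow> 'o set \<Rightarrow> 'o set \<Rightarrow> 'o \<Rightarrow> 'o \<Rightarrow> 'm \<Rightarrow> bool" where
  "reflection C W D X R eta \<longleftrightarrow> R \<in> D \<and> eta \<in> hom C X R \<and>
     (\<forall>R'\<in>D. (\<forall>\<phi>\<in>hom C X R'. \<exists>\<psi>\<in>hom C R R'. eqW C W X R' (cmp C \<psi> eta) \<phi>) \<and>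
        (\<forall>\<psi>1\<in>hom C R R'. \<forall>\<psi>2\<in>hom C R R'.
           eqW C W X R' (cmp C \<psi>1 eta) (cmp C \<psi>2 eta) \<longrightarrow> eqW C W R R' \<psi>1 \<psi>2))"

text \<open>(L, eps) is a coreflection of X into D/W inside C/W, i.e. the counit at X of a
right adjoint to the inclusion: L = tau^-(X) when D = C^-.\<close>
definition coreflection ::
  "('o, 'm) tricat \<Rightarrow> 'o set \<Rightarrow> 'o set \<Rightarrow> 'o \<Rightarrow> 'o \<Rightarrow> 'm \<Rightarrow> bool" where
  "coreflection C W D X L eps \<longleftrightarrow> L \<in> D \<and> eps \<in> hom C L X \<and>
     (\<forall>L'\<in>D. (\<forall>\<phi>\<in>hom C L' X. \<exists>\<psi>\<in>hom C L' L. eqW C W L' X (cmp C eps \<psi>) \<phi>) \<and>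
        (\<forall>\<psi>1\<in>hom C L' L. \<forall>\<psi>2\<in>hom C L' L.
           eqW C W L' X (cmp C eps \<psi>1) (cmp C eps \<psi>2) \<longrightarrow> eqW C W L' L \<psi>1 \<psi>2))"

end

theory Submission
  imports Defs
begin

locale TC =
  fixes C :: "('o,'m) tricat"
  assumes tri: "triangulated C"
begin

lemma additive: "additive C" using tri unfolding triangulated_def by (rule conjunct1)
lemma pre: "preadditive C" using additive unfolding additive_def by (rule conjunct1)
lemma cat: "category C" using pre unfolding preadditive_def by (rule conjunct1)

lemma id_hom[simp]: "idm C X \<in> hom C X X" using cat unfolding category_def by simp
lemma comp_hom[intro]: "f \<in> hom C X Y \<Longrightarrow> g \<in> hom C Y Z \<Longrightarrow> cmp C g f \<in> hom C X Z"
  using cat unfolding category_def by simp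
lemma assoc: "f \<in> hom C X Y \<Longrightarrow> g \<in> hom C Y Z \<Longrightarrow> h \<in> hom C Z W \<Longrightarrow>
   cmp C h (cmp C g f) = cmp C (cmp C h g) f"
  using cat unfolding category_def by simp
lemma id_r[simp]: "f \<in> hom C X Y \<Longrightarrow> cmp C f (idm C X) = f"
  using cat unfolding category_def by simp
lemma id_l[simp]: "f \<in> hom C X Y \<Longrightarrow> cmp C (idm C Y) f = f"
  using cat unfolding category_def by simp
lemma zero_hom[simp]: "mzero C X Y \<in> hom C X Y" using pre unfolding preadditive_def by simp
lemma add_hom[intro,simp]: "f \<in> hom C X Y \<Longrightarrow> g \<in> hom C X Y \<Longrightarrow> madd C f g \<in> hom C X Y"
  using pre unfolding preadditive_def by simp
lemma neg_hom[intro,simp]: "f \<in> hom C X Y \<Longrightarrow> mneg C f \<in> hom C X Y"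
  using pre unfolding preadditive_def by simp
lemma add_assoc: "f \<in> hom C X Y \<Longrightarrow> g \<in> hom C X Y \<Longrightarrow> h \<in> hom C X Y \<Longrightarrow>
  madd C (madd C f g) h = madd C f (madd C g h)"
  using pre unfolding preadditive_def by simp
lemma add_comm: "f \<in> hom C X Y \<Longrightarrow> g \<in> hom C X Y \<Longrightarrow> madd C f g = madd C g f"
  using pre unfolding preadditive_def by simp
lemma add_0l[simp]: "f \<in> hom C X Y \<Longrightarrow> madd C (mzero C X Y) f = f"
  using pre unfolding preadditive_def by simp
lemma add_negl[simp]: "f \<in> hom C X Y \<Longrightarrow> madd C (mneg C f) f = mzero C X Y"
  using pre unfolding preadditive_def by simp
lemma distl: "f1 \<in> hom C X Y \<Longrightarrow> f2 \<in> hom C X Y \<Longrightarrow> g \<in> hom C Y Z \<Longrightarrow>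
        cmp C g (madd C f1 f2) = madd C (cmp C g f1) (cmp C g f2)"
  using pre unfolding preadditive_def by simp
lemma distr: "f \<in> hom C X Y \<Longrightarrow> g1 \<in> hom C Y Z \<Longrightarrow> g2 \<in> hom C Y Z \<Longrightarrow>
        cmp C (madd C g1 g2) f = madd C (cmp C g1 f) (cmp C g2 f)"
  using pre unfolding preadditive_def by simp

lemma add_0r[simp]: "f \<in> hom C X Y \<Longrightarrow> madd C f (mzero C X Y) = f"
  by (metis add_0l add_comm zero_hom)
lemma add_negr[simp]: "f \<in> hom C X Y \<Longrightarrow> madd C f (mneg C f) = mzero C X Y"
  by (metis add_negl add_comm neg_hom)
lemma cancel_l: assumes "a \<in> hom C X Y" "b \<in> hom C X Y" "c \<in> hom C X Y"
  and "madd C a b = madd C a c" shows "b = c"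
proof -
  have "b = madd C (madd C (mneg C a) a) b" using assms by simp
  also have "\<dots> = madd C (mneg C a) (madd C a b)" using assms by (intro add_assoc) auto
  also have "\<dots> = madd C (mneg C a) (madd C a c)" using assms by simp
  also have "\<dots> = madd C (madd C (mneg C a) a) c" using assms by (intro add_assoc[symmetric]) auto
  finally show ?thesis using assms by simp
qed
lemma neg_unique: assumes "a \<in> hom C X Y" "b \<in> hom C X Y" "madd C a b = mzero C X Y"
  shows "b = mneg C a"
  using cancel_l[of a X Y b "mneg C a"] assms by (simp add: neg_hom)
lemma neg_neg[simp]: "f \<in> hom C X Y \<Longrightarrow> mneg C (mneg C f) = f"
  using neg_unique[of "mneg C f" X Y f] by (simp add: neg_hom)
lemma neg_zero[simp]: "mneg C (mzero C X Y) = mzero C X Y"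
  by (metis add_0l neg_unique zero_hom)
lemma comp_0l[simp]: assumes "f \<in> hom C X Y" shows "cmp C (mzero C Y Z) f = mzero C X Z"
proof -
  have m: "cmp C (mzero C Y Z) f \<in> hom C X Z" using comp_hom[OF assms zero_hom] .
  have "madd C (cmp C (mzero C Y Z) f) (cmp C (mzero C Y Z) f) = madd C (cmp C (mzero C Y Z) f) (mzero C X Z)"
    using distr[OF assms zero_hom zero_hom, of Z] m by simp
  then show ?thesis using assms cancel_l[OF m m zero_hom] by simp
qed
lemma comp_0r[simp]: assumes "g \<in> hom C Y Z" shows "cmp C g (mzero C X Y) = mzero C X Z"
proof -
  have m: "cmp C g (mzero C X Y) \<in> hom C X Z" using comp_hom[OF zero_hom assms] .
  have "madd C (cmp C g (mzero C X Y)) (cmp C g (mzero C X Y)) = madd C (cmp C g (mzero C X Y)) (mzero C X Z)"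
    using distl[OF zero_hom zero_hom assms, of X] m by simp
  then show ?thesis using assms cancel_l[OF m m zero_hom] by simp
qed
lemma comp_00[simp]: "cmp C (mzero C Y Z) (mzero C X Y) = mzero C X Z" by simp
lemma comp_negr: assumes "f \<in> hom C X Y" "g \<in> hom C Y Z" shows "cmp C g (mneg C f) = mneg C (cmp C g f)"
proof -
  have "madd C (cmp C g f) (cmp C g (mneg C f)) = mzero C X Z"
    using distl[OF assms(1) neg_hom[OF assms(1)] assms(2)] assms by simp
  thus ?thesis using assms neg_unique[of "cmp C g f" X Z] by (meson comp_hom neg_hom)
qed
lemma comp_negl: assumes "f \<in> hom C X Y" "g \<in> hom C Y Z" shows "cmp C (mneg C g) f = mneg C (cmp C g f)"
proof -
  have "madd C (cmp C g f) (cmp C (mneg C g) f) = mzero C X Z"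
    using distr[OF assms(1) assms(2) neg_hom[OF assms(2)]] assms by simp
  thus ?thesis using assms neg_unique[of "cmp C g f" X Z] by (meson comp_hom neg_hom)
qed
lemma neg_add: assumes "a \<in> hom C X Y" "b \<in> hom C X Y"
  shows "mneg C (madd C a b) = madd C (mneg C a) (mneg C b)"
proof -
  have "madd C (madd C a b) (madd C (mneg C a) (mneg C b)) = mzero C X Y"
  proof -
    have 1: "madd C a b = madd C b a" using assms add_comm by blast
    have "madd C (madd C b a) (madd C (mneg C a) (mneg C b)) = madd C b (madd C a (madd C (mneg C a) (mneg C b)))"
      using assms by (simp add: add_assoc neg_hom add_hom)
    also have "madd C a (madd C (mneg C a) (mneg C b)) = mneg C b"
      using assms by (simp add: add_assoc[symmetric] neg_hom)
    finally show ?thesis using 1 assms by simp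
  qed
  thus ?thesis using neg_unique[OF add_hom[OF assms] add_hom[OF neg_hom[OF assms(1)] neg_hom[OF assms(2)]]] by simp
qed
lemma sub_self_eq: assumes "a \<in> hom C X Y" "b \<in> hom C X Y" "madd C a (mneg C b) = mzero C X Y"
  shows "a = b"
proof -
  have "madd C (mneg C b) a = mzero C X Y" using assms add_comm by (metis neg_hom)
  hence "a = mneg C (mneg C b)" using neg_unique[of "mneg C b" X Y a] assms by (simp add: neg_hom)
  thus ?thesis using assms by simp
qed


lemma ax_shM_hom: "\<forall>X Y f. f \<in> hom C X Y \<longrightarrow> shM C f \<in> hom C (shO C X) (shO C Y)"
  using tri unfolding triangulated_def by (elim conjE) assumption
lemma ax_shM_id: "\<forall>X. shM C (idm C X) = idm C (shO C X)"
  using tri unfolding triangulated_def by (elim conjE) assumption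
lemma ax_shM_cmp: "\<forall>X Y Z f g. f \<in> hom C X Y \<longrightarrow> g \<in> hom C Y Z \<longrightarrow>
        shM C (cmp C g f) = cmp C (shM C g) (shM C f)"
  using tri unfolding triangulated_def by (elim conjE) assumption
lemma ax_shM_add: "\<forall>X Y f g. f \<in> hom C X Y \<longrightarrow> g \<in> hom C X Y \<longrightarrow>
        shM C (madd C f g) = madd C (shM C f) (shM C g)"
  using tri unfolding triangulated_def by (elim conjE) assumption
lemma ax_bij: "bij (shO C)"
  using tri unfolding triangulated_def by (elim conjE) assumption
lemma ax_bijM: "\<forall>X Y. bij_betw (shM C) (hom C X Y) (hom C (shO C X) (shO C Y))"
  using tri unfolding triangulated_def by (elim conjE) assumption
lemma ax_typed: "\<forall>X Y Z f g h. dtri C X Y Z f g h \<longrightarrow>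
        f \<in> hom C X Y \<and> g \<in> hom C Y Z \<and> h \<in> hom C Z (shO C X)"
  using tri unfolding triangulated_def by (elim conjE) assumption
lemma ax_tr1: "\<forall>X Z. zero_obj C Z \<longrightarrow>
        dtri C X X Z (idm C X) (mzero C X Z) (mzero C Z (shO C X))"
  using tri unfolding triangulated_def by (elim conjE) assumption
lemma ax_emb: "\<forall>X Y f. f \<in> hom C X Y \<longrightarrow> (\<exists>Z g h. dtri C X Y Z f g h)"
  using tri unfolding triangulated_def by (elim conjE) assumption
lemma ax_tr2: "\<forall>X Y Z f g h. f \<in> hom C X Y \<longrightarrow> g \<in> hom C Y Z \<longrightarrow> h \<in> hom C Z (shO C X) \<longrightarrow>
        (dtri C X Y Z f g h \<longleftrightarrow> dtri C Y Z (shO C X) g h (mneg C (shM C f)))"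
  using tri unfolding triangulated_def by (elim conjE) assumption
lemma ax_tr3: "\<forall>X Y Z f g h X' Y' Z' f' g' h' a b.
        dtri C X Y Z f g h \<longrightarrow> dtri C X' Y' Z' f' g' h' \<longrightarrow>
        a \<in> hom C X X' \<longrightarrow> b \<in> hom C Y Y' \<longrightarrow> cmp C b f = cmp C f' a \<longrightarrow>
        (\<exists>c\<in>hom C Z Z'. cmp C c g = cmp C g' b \<and> cmp C h' c = cmp C (shM C a) h)"
  using tri unfolding triangulated_def by (elim conjE) assumption

lemma shM_hom[simp,intro]: "f \<in> hom C X Y \<Longrightarrow> shM C f \<in> hom C (shO C X) (shO C Y)"
  using ax_shM_hom by blast
lemma shM_id[simp]: "shM C (idm C X) = idm C (shO C X)" using ax_shM_id by blast
lemma shM_cmp: "f \<in> hom C X Y \<Longrightarrow> g \<in> hom C Y Z \<Longrightarrow> shM C (cmp C g f) = cmp C (shM C g) (shM C f)"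
  using ax_shM_cmp by blast
lemma shM_add: "f \<in> hom C X Y \<Longrightarrow> g \<in> hom C X Y \<Longrightarrow> shM C (madd C f g) = madd C (shM C f) (shM C g)"
  using ax_shM_add by blast
lemma shM_inj: "f \<in> hom C X Y \<Longrightarrow> g \<in> hom C X Y \<Longrightarrow> shM C f = shM C g \<Longrightarrow> f = g"
  using ax_bijM unfolding bij_betw_def inj_on_def by blast
lemma shM_surj: assumes "g \<in> hom C (shO C X) (shO C Y)" shows "\<exists>f\<in>hom C X Y. shM C f = g"
proof -
  have "shM C ` hom C X Y = hom C (shO C X) (shO C Y)" using ax_bijM unfolding bij_betw_def by blast
  hence "g \<in> shM C ` hom C X Y" using assms by simp
  thus ?thesis by blast
qed
lemma shO_surj: "\<exists>X. shO C X = Y"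
  using ax_bij unfolding bij_def surj_def by metis
lemma typed: "dtri C X Y Z f g h \<Longrightarrow> f \<in> hom C X Y \<and> g \<in> hom C Y Z \<and> h \<in> hom C Z (shO C X)"
  using ax_typed by blast
lemma shM_zero[simp]: "shM C (mzero C X Y) = mzero C (shO C X) (shO C Y)"
proof -
  have "shM C (madd C (mzero C X Y) (mzero C X Y)) = madd C (shM C (mzero C X Y)) (shM C (mzero C X Y))"
    using shM_add[OF zero_hom zero_hom] .
  hence "madd C (shM C (mzero C X Y)) (shM C (mzero C X Y)) = madd C (shM C (mzero C X Y)) (mzero C (shO C X) (shO C Y))"
    using shM_hom[OF zero_hom[of X Y]] by simp
  thus ?thesis using cancel_l shM_hom[OF zero_hom[of X Y]] zero_hom by blast
qed
lemma shM_neg: assumes "f \<in> hom C X Y" shows "shM C (mneg C f) = mneg C (shM C f)"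
proof -
  have "madd C (shM C f) (shM C (mneg C f)) = mzero C (shO C X) (shO C Y)"
    using shM_add[OF assms neg_hom[OF assms]] assms by simp
  thus ?thesis using neg_unique assms by (meson neg_hom shM_hom)
qed

lemma zero_exists: "\<exists>Z. zero_obj C Z" using additive unfolding additive_def by blast
lemma zero_from: "zero_obj C Z \<Longrightarrow> f \<in> hom C Z Y \<Longrightarrow> f = mzero C Z Y"
  unfolding zero_obj_def by (metis id_r comp_0r)
lemma zero_to: "zero_obj C Z \<Longrightarrow> f \<in> hom C X Z \<Longrightarrow> f = mzero C X Z"
  unfolding zero_obj_def by (metis id_l comp_0l)
lemma zero_shift: "zero_obj C Z \<Longrightarrow> zero_obj C (shO C Z)"
  unfolding zero_obj_def by (metis shM_id shM_zero)

lemma tr1: "zero_obj C Z \<Longrightarrow> dtri C X X Z (idm C X) (mzero C X Z) (mzero C Z (shO C X))"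
  using ax_tr1 by blast
lemma emb: "f \<in> hom C X Y \<Longrightarrow> \<exists>Z g h. dtri C X Y Z f g h" using ax_emb by blast
lemma tr2: "f \<in> hom C X Y \<Longrightarrow> g \<in> hom C Y Z \<Longrightarrow> h \<in> hom C Z (shO C X) \<Longrightarrow>
        dtri C X Y Z f g h \<longleftrightarrow> dtri C Y Z (shO C X) g h (mneg C (shM C f))"
  using ax_tr2 by blast
lemma tr3: "dtri C X Y Z f g h \<Longrightarrow> dtri C X' Y' Z' f' g' h' \<Longrightarrow>
        a \<in> hom C X X' \<Longrightarrow> b \<in> hom C Y Y' \<Longrightarrow> cmp C b f = cmp C f' a \<Longrightarrow>
        \<exists>c\<in>hom C Z Z'. cmp C c g = cmp C g' b \<and> cmp C h' c = cmp C (shM C a) h"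
  using ax_tr3 by blast

lemma rot: "dtri C X Y Z f g h \<Longrightarrow> dtri C Y Z (shO C X) g h (mneg C (shM C f))"
  using tr2 typed by blast
lemma backrot: assumes "dtri C Y Z (shO C X) g h k" shows "\<exists>f\<in>hom C X Y. dtri C X Y Z f g h"
proof -
  have t: "g \<in> hom C Y Z" "h \<in> hom C Z (shO C X)" "k \<in> hom C (shO C X) (shO C Y)" using typed[OF assms] by auto
  obtain f where f: "f \<in> hom C X Y" "shM C f = mneg C k" using shM_surj[OF neg_hom[OF t(3)]] by blast
  have "mneg C (shM C f) = k" using f t by simp
  hence "dtri C X Y Z f g h" using tr2[OF f(1) t(1) t(2)] assms by simp
  thus ?thesis using f by blast
qed
lemma triv_left: assumes "zero_obj C Z" shows "dtri C Z Y Y (mzero C Z Y) (idm C Y) (mzero C Y (shO C Z))"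
proof -
  have "dtri C Y Y (shO C Z) (idm C Y) (mzero C Y (shO C Z)) (mzero C (shO C Z) (shO C Y))"
    using tr1 zero_shift[OF assms] by blast
  thus ?thesis using tr2[of "mzero C Z Y" Z Y "idm C Y" Y "mzero C Y (shO C Z)"] by simp
qed

lemma cz1: assumes "dtri C X Y Z f g h" shows "cmp C g f = mzero C X Z"
proof -
  obtain Z0 where z: "zero_obj C Z0" using zero_exists by blast
  have t: "f \<in> hom C X Y" "g \<in> hom C Y Z" "h \<in> hom C Z (shO C X)" using typed[OF assms] by auto
  obtain c where c: "c \<in> hom C Z0 Z" "cmp C c (mzero C X Z0) = cmp C g f"
    using tr3[OF tr1[OF z, of X] assms id_hom t(1)] t by auto
  thus ?thesis by simp
qed

lemma exk: assumes "dtri C A B Cc f g h" "\<phi> \<in> hom C B D" "cmp C \<phi> f = mzero C A D"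
  shows "\<exists>\<psi>\<in>hom C Cc D. \<phi> = cmp C \<psi> g"
proof -
  obtain Z0 where z: "zero_obj C Z0" using zero_exists by blast
  have t: "f \<in> hom C A B" "g \<in> hom C B Cc" "h \<in> hom C Cc (shO C A)" using typed[OF assms(1)] by auto
  have e: "cmp C \<phi> f = cmp C (mzero C Z0 D) (mzero C A Z0)" using assms(3) by simp
  obtain c where "c \<in> hom C Cc D" "cmp C c g = cmp C (idm C D) \<phi>"
    using tr3[OF assms(1) triv_left[OF z, of D] zero_hom assms(2) e] by blast
  thus ?thesis using assms(2) by auto
qed

lemma exc: assumes "dtri C A B Cc f g h" "\<phi> \<in> hom C D B" "cmp C g \<phi> = mzero C D Cc"
  shows "\<exists>\<psi>\<in>hom C D A. \<phi> = cmp C f \<psi>"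
proof -
  obtain Z0 where z: "zero_obj C Z0" using zero_exists by blast
  have t: "f \<in> hom C A B" "g \<in> hom C B Cc" "h \<in> hom C Cc (shO C A)" using typed[OF assms(1)] by auto
  have s: "dtri C D Z0 (shO C D) (mzero C D Z0) (mzero C Z0 (shO C D)) (mneg C (idm C (shO C D)))"
    using rot[OF tr1[OF z, of D]] by simp
  have r: "dtri C B Cc (shO C A) g h (mneg C (shM C f))" using rot[OF assms(1)] .
  have e: "cmp C (mzero C Z0 Cc) (mzero C D Z0) = cmp C g \<phi>" using assms(3) by simp
  obtain c where c: "c \<in> hom C (shO C D) (shO C A)"
     "cmp C (mneg C (shM C f)) c = cmp C (shM C \<phi>) (mneg C (idm C (shO C D)))"
    using tr3[OF s r assms(2) zero_hom e] by blast
  have "cmp C (shM C \<phi>) (mneg C (idm C (shO C D))) = mneg C (shM C \<phi>)"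
    using comp_negr[OF id_hom shM_hom[OF assms(2)]] shM_hom[OF assms(2)] by simp
  moreover have "cmp C (mneg C (shM C f)) c = mneg C (cmp C (shM C f) c)"
    using comp_negl[OF c(1) shM_hom[OF t(1)]] .
  ultimately have "mneg C (cmp C (shM C f) c) = mneg C (shM C \<phi>)" using c by simp
  hence e2: "cmp C (shM C f) c = shM C \<phi>"
    by (metis neg_neg comp_hom c(1) shM_hom t(1) assms(2))
  obtain \<psi> where p: "\<psi> \<in> hom C D A" "shM C \<psi> = c" using shM_surj[OF c(1)] by blast
  have "shM C (cmp C f \<psi>) = shM C \<phi>" using shM_cmp[OF p(1) t(1)] p e2 by simp
  hence "cmp C f \<psi> = \<phi>" using shM_inj comp_hom[OF p(1) t(1)] assms(2) by blast
  thus ?thesis using p by blast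
qed


lemma retract: assumes K: "closed_subcat C K" and B: "B \<in> K" and s: "s \<in> hom C A B" and f: "f \<in> hom C B A"
  and fs: "cmp C f s = idm C A" shows "A \<in> K"
proof -
  obtain Z g h where tr: "dtri C A B Z s g h" using emb[OF s] by blast
  have g: "g \<in> hom C B Z" and h: "h \<in> hom C Z (shO C A)" using typed[OF tr] by auto
  have r1: "dtri C B Z (shO C A) g h (mneg C (shM C s))" using rot[OF tr] .
  have "cmp C (mneg C (shM C s)) h = mzero C Z (shO C B)" using cz1[OF rot[OF r1]] .
  hence sh: "cmp C (shM C s) h = mzero C Z (shO C B)" using comp_negl[OF h shM_hom[OF s]]
    by (metis comp_hom h neg_neg neg_zero s shM_hom)
  have "h = cmp C (shM C (cmp C f s)) h" using fs h by simp
  also have "\<dots> = cmp C (shM C f) (cmp C (shM C s) h)" using shM_cmp[OF s f] assoc[OF h shM_hom[OF s] shM_hom[OF f]] by simp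
  also have "\<dots> = mzero C Z (shO C A)" using sh f by simp
  finally have h0: "h = mzero C Z (shO C A)" .
  have "\<exists>t\<in>hom C Z B. idm C Z = cmp C g t" using exc[OF r1 id_hom] h0 h by auto
  then obtain t where t: "t \<in> hom C Z B" "cmp C g t = idm C Z" by metis
  have gs: "cmp C g s = mzero C A Z" using cz1[OF tr] .
  have ft: "cmp C f t \<in> hom C Z A" using f t by auto
  have sft: "cmp C s (cmp C f t) \<in> hom C Z B" using s ft by auto
  define i2 where "i2 = madd C t (mneg C (cmp C s (cmp C f t)))"
  have i2: "i2 \<in> hom C Z B" unfolding i2_def using t sft by auto
  have gsft: "cmp C g (cmp C s (cmp C f t)) = mzero C Z Z"
    using assoc[OF ft s g] gs ft by simp
  have p2i2: "cmp C g i2 = idm C Z"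
    unfolding i2_def using distl[OF t(1) neg_hom[OF sft] g] comp_negr[OF sft g] gsft t comp_hom[OF t(1) g] by simp
  have fsft: "cmp C f (cmp C s (cmp C f t)) = cmp C f t"
    using assoc[OF ft s f] fs ft by simp
  have p1i2: "cmp C f i2 = mzero C Z A"
    unfolding i2_def using distl[OF t(1) neg_hom[OF sft] f] comp_negr[OF sft f] fsft ft by simp
  define P where "P = madd C (cmp C s f) (cmp C i2 g)"
  have sf: "cmp C s f \<in> hom C B B" using s f by auto
  have i2g: "cmp C i2 g \<in> hom C B B" using i2 g by auto
  have P: "P \<in> hom C B B" unfolding P_def using sf i2g by auto
  define d where "d = madd C (idm C B) (mneg C P)"
  have d: "d \<in> hom C B B" unfolding d_def using P by auto
  have Ps: "cmp C P s = s"
  proof -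
    have "cmp C P s = madd C (cmp C (cmp C s f) s) (cmp C (cmp C i2 g) s)"
      unfolding P_def using distr[OF s sf i2g] .
    also have "cmp C (cmp C s f) s = s" using assoc[OF s f s] fs s by simp
    also have "cmp C (cmp C i2 g) s = mzero C A B" using assoc[OF s g i2] gs i2 by simp
    finally show ?thesis using s by simp
  qed
  have ds: "cmp C d s = mzero C A B"
    unfolding d_def using distr[OF s id_hom neg_hom[OF P]] comp_negl[OF s P] Ps s by simp
  obtain d' where d': "d' \<in> hom C Z B" "d = cmp C d' g" using exk[OF tr d ds] by blast
  have Pt: "cmp C P t = t"
  proof -
    have "cmp C P t = madd C (cmp C (cmp C s f) t) (cmp C (cmp C i2 g) t)"
      unfolding P_def using distr[OF t(1) sf i2g] .
    also have "cmp C (cmp C i2 g) t = i2" using assoc[OF t(1) g i2] t i2 by simp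
    also have "cmp C (cmp C s f) t = cmp C s (cmp C f t)" using assoc[OF t(1) f s] by simp
    finally have "cmp C P t = madd C (cmp C s (cmp C f t)) (madd C t (mneg C (cmp C s (cmp C f t))))"
      unfolding i2_def .
    also have "\<dots> = t" using add_comm[OF t(1) neg_hom[OF sft]] add_assoc[OF sft neg_hom[OF sft] t(1), symmetric] sft t
      by simp
    finally show ?thesis .
  qed
  have dt: "cmp C d t = mzero C Z B"
    unfolding d_def using distr[OF t(1) id_hom neg_hom[OF P]] comp_negl[OF t(1) P] Pt t by simp
  have "d' = cmp C d t" using d' assoc[OF t(1) g d'(1)] t by simp
  hence "d = mzero C B B" using dt d' g by simp
  hence "idm C B = P" using sub_self_eq[OF id_hom P] unfolding d_def by simp
  hence iP: "madd C (cmp C s f) (cmp C i2 g) = idm C B" unfolding P_def by simp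
  have "is_biproduct C A Z B" unfolding is_biproduct_def
    apply (rule bexI[of _ s], rule bexI[of _ i2], rule bexI[of _ f], rule bexI[of _ g])
    using fs p2i2 gs p1i2 iP s i2 f g by simp_all
  thus ?thesis using K B unfolding closed_subcat_def by blast
qed

end

locale TW = TC +
  fixes S T U V :: "'a set"
  assumes twin: "twin_cotorsion_pair C S T U V"
begin

abbreviation "W \<equiv> Wcl S T U V"

lemma cpST: "cotorsion_pair C S T" using twin unfolding twin_cotorsion_pair_def by blast
lemma cpUV: "cotorsion_pair C U V" using twin unfolding twin_cotorsion_pair_def by blast
lemma clS: "closed_subcat C S" using cpST unfolding cotorsion_pair_def by blast
lemma clT: "closed_subcat C T" using cpST unfolding cotorsion_pair_def by blast
lemma clU: "closed_subcat C U" using cpUV unfolding cotorsion_pair_def by blast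
lemma clV: "closed_subcat C V" using cpUV unfolding cotorsion_pair_def by blast
lemma zero_in: "closed_subcat C K \<Longrightarrow> zero_obj C Z \<Longrightarrow> Z \<in> K"
  unfolding closed_subcat_def by blast
lemma WU: "Z \<in> W \<Longrightarrow> Z \<in> U" unfolding Wcl_def by blast
lemma WT: "Z \<in> W \<Longrightarrow> Z \<in> T" unfolding Wcl_def by blast
lemma zeroW: "zero_obj C Z \<Longrightarrow> Z \<in> W" unfolding Wcl_def using zero_in clU clT by blast

lemma HV1: "U0 \<in> U \<Longrightarrow> V0 \<in> V \<Longrightarrow> \<phi> \<in> hom C U0 (shO C V0) \<Longrightarrow> \<phi> = mzero C U0 (shO C V0)"
  using cpUV unfolding cotorsion_pair_def hom_vanish_def shift_up_def by blast
lemma HVst: "S0 \<in> S \<Longrightarrow> T0 \<in> T \<Longrightarrow> \<phi> \<in> hom C S0 (shO C T0) \<Longrightarrow> \<phi> = mzero C S0 (shO C T0)"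
  using cpST unfolding cotorsion_pair_def hom_vanish_def shift_up_def by blast
lemma HV2: "S0 \<in> S \<Longrightarrow> V0 \<in> V \<Longrightarrow> \<phi> \<in> hom C S0 (shO C V0) \<Longrightarrow> \<phi> = mzero C S0 (shO C V0)"
  using twin unfolding twin_cotorsion_pair_def hom_vanish_def shift_up_def by blast
lemma HV3: assumes "shO C X0 \<in> S" "T0 \<in> T" "k \<in> hom C X0 T0" shows "k = mzero C X0 T0"
proof -
  have "shM C k = mzero C (shO C X0) (shO C T0)" using HVst[OF assms(1,2)] assms(3) by blast
  hence "shM C k = shM C (mzero C X0 T0)" by simp
  thus ?thesis using shM_inj assms(3) zero_hom by blast
qed
lemma HV4: assumes "shO C X0 \<in> S" "V0 \<in> V" "k \<in> hom C X0 V0" shows "k = mzero C X0 V0"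
proof -
  have "shM C k = mzero C (shO C X0) (shO C V0)" using HV2[OF assms(1,2)] assms(3) by blast
  hence "shM C k = shM C (mzero C X0 V0)" by simp
  thus ?thesis using shM_inj assms(3) zero_hom by blast
qed

lemma UV_tri: "\<exists>U0 V0 f g h. U0 \<in> U \<and> V0 \<in> V \<and> dtri C U0 Y (shO C V0) f g h"
proof -
  have "Y \<in> star C U (shift_up C V)" using cpUV unfolding cotorsion_pair_def by blast
  thus ?thesis unfolding star_def shift_up_def by blast
qed
lemma ST_tri: "\<exists>X0 T0 a b c. shO C X0 \<in> S \<and> T0 \<in> T \<and> dtri C X0 Y T0 a b c"
proof -
  have "shO C Y \<in> star C S (shift_up C T)" using cpST unfolding cotorsion_pair_def by blast
  then obtain S0 T0 f g h where st: "S0 \<in> S" "T0 \<in> T" "dtri C S0 (shO C Y) (shO C T0) f g h"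
    unfolding star_def shift_up_def by blast
  obtain h' where 1: "dtri C T0 S0 (shO C Y) h' f g" using backrot[OF st(3)] by blast
  obtain b where 2: "dtri C Y T0 S0 b h' f" using backrot[OF 1] by blast
  obtain X0 where x: "shO C X0 = S0" using shO_surj by blast
  obtain a where 3: "dtri C X0 Y T0 a b h'" using backrot[of Y T0 X0 b h' f] 2 x by blast
  show ?thesis using 3 x st by blast
qed

lemma UCHAR: assumes "\<forall>V0\<in>V. \<forall>\<phi>\<in>hom C Y (shO C V0). \<phi> = mzero C Y (shO C V0)" shows "Y \<in> U"
proof -
  obtain U0 V0 f g h where t: "U0 \<in> U" "V0 \<in> V" "dtri C U0 Y (shO C V0) f g h" using UV_tri by blast
  have f: "f \<in> hom C U0 Y" and g: "g \<in> hom C Y (shO C V0)" using typed[OF t(3)] by auto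
  have "g = mzero C Y (shO C V0)" using assms t(2) g by blast
  hence "cmp C g (idm C Y) = mzero C Y (shO C V0)" using g by simp
  then obtain s where s: "s \<in> hom C Y U0" "idm C Y = cmp C f s" using exc[OF t(3) id_hom] by blast
  show ?thesis using retract[OF clU t(1) s(1) f] s(2) by simp
qed
lemma TCHAR: assumes "\<forall>X0. shO C X0 \<in> S \<longrightarrow> (\<forall>k\<in>hom C X0 Y. k = mzero C X0 Y)" shows "Y \<in> T"
proof -
  obtain X0 T0 a b c where t: "shO C X0 \<in> S" "T0 \<in> T" "dtri C X0 Y T0 a b c" using ST_tri by blast
  have a: "a \<in> hom C X0 Y" and b: "b \<in> hom C Y T0" using typed[OF t(3)] by auto
  have "a = mzero C X0 Y" using assms t(1) a by blast
  hence "cmp C (idm C Y) a = mzero C X0 Y" using a by simp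
  then obtain p where p: "p \<in> hom C T0 Y" "idm C Y = cmp C p b" using exk[OF t(3) id_hom] by blast
  show ?thesis using retract[OF clT t(2) b p(1)] p(2) by simp
qed

lemma W_Cplus: assumes "Z \<in> W" shows "Z \<in> Cplus C S T U V"
proof -
  obtain Z0 where z: "zero_obj C Z0" using zero_exists by blast
  have "dtri C Z Z (shO C Z0) (idm C Z) (mzero C Z (shO C Z0)) (mzero C (shO C Z0) (shO C Z))"
    using tr1 zero_shift[OF z] by blast
  moreover have "shO C Z0 \<in> shift_up C V" unfolding shift_up_def using zero_in[OF clV z] by blast
  ultimately show ?thesis unfolding Cplus_def star_def using assms by blast
qed
lemma V_Cplus: assumes "V0 \<in> V" shows "shO C V0 \<in> Cplus C S T U V"
proof -
  obtain Z0 where z: "zero_obj C Z0" using zero_exists by blast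
  have "dtri C Z0 (shO C V0) (shO C V0) (mzero C Z0 (shO C V0)) (idm C (shO C V0)) (mzero C (shO C V0) (shO C Z0))"
    using triv_left[OF z] .
  moreover have "shO C V0 \<in> shift_up C V" unfolding shift_up_def using assms by blast
  ultimately show ?thesis unfolding Cplus_def star_def using zeroW[OF z] by blast
qed
lemma S_Cminus: assumes "shO C X0 \<in> S" shows "X0 \<in> Cminus C S T U V"
proof -
  obtain Z0 where z: "zero_obj C Z0" using zero_exists by blast
  have "dtri C X0 X0 Z0 (idm C X0) (mzero C X0 Z0) (mzero C Z0 (shO C X0))" using tr1[OF z] .
  thus ?thesis unfolding Cminus_def star_def shift_down_def using zeroW[OF z] assms by blast
qed
lemma U_Cminus: assumes "U2 \<in> U" shows "U2 \<in> Cminus C S T U V"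
proof -
  obtain X5 T5 s p q where t: "shO C X5 \<in> S" "T5 \<in> T" "dtri C X5 U2 T5 s p q" using ST_tri by blast
  have p: "p \<in> hom C U2 T5" and q: "q \<in> hom C T5 (shO C X5)" using typed[OF t(3)] by auto
  have r: "dtri C U2 T5 (shO C X5) p q (mneg C (shM C s))" using rot[OF t(3)] .
  have "T5 \<in> U"
  proof (rule UCHAR, intro ballI)
    fix V0 \<phi> assume v: "V0 \<in> V" and ph: "\<phi> \<in> hom C T5 (shO C V0)"
    have "cmp C \<phi> p = mzero C U2 (shO C V0)" using HV1[OF assms v] comp_hom[OF p ph] by blast
    then obtain \<psi> where ps: "\<psi> \<in> hom C (shO C X5) (shO C V0)" "\<phi> = cmp C \<psi> q" using exk[OF r ph] by blast
    have "\<psi> = mzero C (shO C X5) (shO C V0)" using HV2[OF t(1) v ps(1)] .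
    thus "\<phi> = mzero C T5 (shO C V0)" using ps(2) comp_0l[OF q] by simp
  qed
  hence "T5 \<in> W" unfolding Wcl_def using t(2) by blast
  thus ?thesis unfolding Cminus_def star_def shift_down_def using t by blast
qed
lemma T_Cplus: assumes "T0 \<in> T" shows "T0 \<in> Cplus C S T U V"
proof -
  obtain U1 V1 f g h where t: "U1 \<in> U" "V1 \<in> V" "dtri C U1 T0 (shO C V1) f g h" using UV_tri by blast
  have f: "f \<in> hom C U1 T0" using typed[OF t(3)] by auto
  obtain f0 where r: "dtri C V1 U1 T0 f0 f g" using backrot[OF t(3)] by blast
  have "U1 \<in> T"
  proof (rule TCHAR, intro allI impI ballI)
    fix X0 k assume x: "shO C X0 \<in> S" and k: "k \<in> hom C X0 U1"
    have "cmp C f k = mzero C X0 T0" using HV3[OF x assms] comp_hom[OF k f] by blast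
    then obtain k' where kk: "k' \<in> hom C X0 V1" "k = cmp C f0 k'" using exc[OF r k] by blast
    have "k' = mzero C X0 V1" using HV4[OF x t(2) kk(1)] .
    moreover have "f0 \<in> hom C V1 U1" using typed[OF r] by auto
    ultimately show "k = mzero C X0 U1" using kk(2) by simp
  qed
  hence "U1 \<in> W" unfolding Wcl_def using t(1) by blast
  thus ?thesis unfolding Cplus_def star_def shift_up_def using t by blast
qed


abbreviation "FT \<equiv> factors_through C W"
abbreviation "EQ \<equiv> eqW C W"

lemma ft_intro: "Z \<in> W \<Longrightarrow> g \<in> hom C X Z \<Longrightarrow> h \<in> hom C Z Y \<Longrightarrow> FT X Y (cmp C h g)"
  unfolding factors_through_def by blast
lemma ft_zero: "FT X Y (mzero C X Y)"
proof -
  obtain Z0 where z: "zero_obj C Z0" using zero_exists by blast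
  show ?thesis using ft_intro[OF zeroW[OF z] zero_hom zero_hom] by simp
qed
lemma ft_compL: assumes "FT X Y f" "k \<in> hom C Y Y'" shows "FT X Y' (cmp C k f)"
proof -
  obtain Z g h where z: "Z \<in> W" "g \<in> hom C X Z" "h \<in> hom C Z Y" "f = cmp C h g"
    using assms(1) unfolding factors_through_def by blast
  have "cmp C k f = cmp C (cmp C k h) g" using z assoc[OF z(2) z(3) assms(2)] by simp
  thus ?thesis using ft_intro[OF z(1) z(2) comp_hom[OF z(3) assms(2)]] by simp
qed
lemma ft_compR: assumes "FT X Y f" "k \<in> hom C X' X" shows "FT X' Y (cmp C f k)"
proof -
  obtain Z g h where z: "Z \<in> W" "g \<in> hom C X Z" "h \<in> hom C Z Y" "f = cmp C h g"
    using assms(1) unfolding factors_through_def by blast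
  have "cmp C f k = cmp C h (cmp C g k)" using z assoc[OF assms(2) z(2) z(3)] by simp
  thus ?thesis using ft_intro[OF z(1) comp_hom[OF assms(2) z(2)] z(3)] by simp
qed
lemma ft_neg: assumes "FT X Y f" shows "FT X Y (mneg C f)"
proof -
  obtain Z g h where z: "Z \<in> W" "g \<in> hom C X Z" "h \<in> hom C Z Y" "f = cmp C h g"
    using assms(1) unfolding factors_through_def by blast
  have "mneg C f = cmp C (mneg C h) g" using z comp_negl[OF z(2) z(3)] by simp
  thus ?thesis using ft_intro[OF z(1) z(2) neg_hom[OF z(3)]] by simp
qed
lemma ft_add: assumes "FT X Y f1" "FT X Y f2" shows "FT X Y (madd C f1 f2)"
proof -
  obtain Z1 g1 h1 where z1: "Z1 \<in> W" "g1 \<in> hom C X Z1" "h1 \<in> hom C Z1 Y" "f1 = cmp C h1 g1"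
    using assms(1) unfolding factors_through_def by blast
  obtain Z2 g2 h2 where z2: "Z2 \<in> W" "g2 \<in> hom C X Z2" "h2 \<in> hom C Z2 Y" "f2 = cmp C h2 g2"
    using assms(2) unfolding factors_through_def by blast
  obtain B where "is_biproduct C Z1 Z2 B" using additive unfolding additive_def by blast
  hence bp: "is_biproduct C Z1 Z2 B" .
  then obtain i1 i2 p1 p2 where i: "i1 \<in> hom C Z1 B" "i2 \<in> hom C Z2 B" "p1 \<in> hom C B Z1" "p2 \<in> hom C B Z2"
    "cmp C p1 i1 = idm C Z1" "cmp C p2 i2 = idm C Z2" "cmp C p2 i1 = mzero C Z1 Z2" "cmp C p1 i2 = mzero C Z2 Z1"
    unfolding is_biproduct_def by blast
  have BW: "B \<in> W" using bp z1(1) z2(1) clU clT unfolding Wcl_def closed_subcat_def by blast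
  define G where "G = madd C (cmp C i1 g1) (cmp C i2 g2)"
  define H where "H = madd C (cmp C h1 p1) (cmp C h2 p2)"
  have a1: "cmp C i1 g1 \<in> hom C X B" using i z1 by auto
  have a2: "cmp C i2 g2 \<in> hom C X B" using i z2 by auto
  have b1: "cmp C h1 p1 \<in> hom C B Y" using i z1 by auto
  have b2: "cmp C h2 p2 \<in> hom C B Y" using i z2 by auto
  have G: "G \<in> hom C X B" unfolding G_def using a1 a2 by auto
  have H: "H \<in> hom C B Y" unfolding H_def using b1 b2 by auto
  have Hi1: "cmp C H i1 = h1"
  proof -
    have "cmp C H i1 = madd C (cmp C (cmp C h1 p1) i1) (cmp C (cmp C h2 p2) i1)"
      unfolding H_def using distr[OF i(1) b1 b2] .
    also have "cmp C (cmp C h1 p1) i1 = h1" using assoc[OF i(1) i(3) z1(3)] i z1 by simp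
    also have "cmp C (cmp C h2 p2) i1 = mzero C Z1 Y" using assoc[OF i(1) i(4) z2(3)] i z2 by simp
    finally show ?thesis using z1 by simp
  qed
  have Hi2: "cmp C H i2 = h2"
  proof -
    have "cmp C H i2 = madd C (cmp C (cmp C h1 p1) i2) (cmp C (cmp C h2 p2) i2)"
      unfolding H_def using distr[OF i(2) b1 b2] .
    also have "cmp C (cmp C h2 p2) i2 = h2" using assoc[OF i(2) i(4) z2(3)] i z2 by simp
    also have "cmp C (cmp C h1 p1) i2 = mzero C Z2 Y" using assoc[OF i(2) i(3) z1(3)] i z1 by simp
    finally show ?thesis using z2 by simp
  qed
  have "cmp C H G = madd C (cmp C H (cmp C i1 g1)) (cmp C H (cmp C i2 g2))"
    unfolding G_def using distl[OF a1 a2 H] .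
  also have "cmp C H (cmp C i1 g1) = f1" using assoc[OF z1(2) i(1) H] Hi1 z1 by simp
  also have "cmp C H (cmp C i2 g2) = f2" using assoc[OF z2(2) i(2) H] Hi2 z2 by simp
  finally show ?thesis using ft_intro[OF BW G H] by simp
qed

definition "NT Y \<longleftrightarrow> (\<forall>Z\<in>W. \<forall>h\<in>hom C Z Y. h = mzero C Z Y)"
definition "NS X \<longleftrightarrow> (\<forall>Z\<in>W. \<forall>g\<in>hom C X Z. g = mzero C X Z)"
lemma NT_V: "V0 \<in> V \<Longrightarrow> NT (shO C V0)" unfolding NT_def using HV1 WU by blast
lemma NS_S: "shO C X0 \<in> S \<Longrightarrow> NS X0" unfolding NS_def using HV3 WT by blast
lemma ft_NT: assumes "NT Y" "FT X Y f" shows "f = mzero C X Y"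
proof -
  obtain Z g h where z: "Z \<in> W" "g \<in> hom C X Z" "h \<in> hom C Z Y" "f = cmp C h g"
    using assms(2) unfolding factors_through_def by blast
  have "h = mzero C Z Y" using assms(1) z unfolding NT_def by blast
  thus ?thesis using z comp_0l[OF z(2)] by simp
qed
lemma ft_NS: assumes "NS X" "FT X Y f" shows "f = mzero C X Y"
proof -
  obtain Z g h where z: "Z \<in> W" "g \<in> hom C X Z" "h \<in> hom C Z Y" "f = cmp C h g"
    using assms(2) unfolding factors_through_def by blast
  have "g = mzero C X Z" using assms(1) z unfolding NS_def by blast
  thus ?thesis using z comp_0r[OF z(3)] by simp
qed
lemma eq_NT: assumes "NT Y" "EQ X Y f g" "f \<in> hom C X Y" "g \<in> hom C X Y" shows "f = g"
  using ft_NT[OF assms(1)] assms sub_self_eq unfolding eqW_def by blast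
lemma eq_NS: assumes "NS X" "EQ X Y f g" "f \<in> hom C X Y" "g \<in> hom C X Y" shows "f = g"
  using ft_NS[OF assms(1)] assms sub_self_eq unfolding eqW_def by blast
lemma eq_refl: "f \<in> hom C X Y \<Longrightarrow> EQ X Y f f" unfolding eqW_def using ft_zero by simp
lemma eq_compL: assumes "EQ X Y f g" "f \<in> hom C X Y" "g \<in> hom C X Y" "k \<in> hom C Y Y'"
  shows "EQ X Y' (cmp C k f) (cmp C k g)"
proof -
  have "cmp C k (madd C f (mneg C g)) = madd C (cmp C k f) (mneg C (cmp C k g))"
    using distl[OF assms(2) neg_hom[OF assms(3)] assms(4)] comp_negr[OF assms(3,4)] by simp
  thus ?thesis using ft_compL[OF _ assms(4)] assms(1) unfolding eqW_def by metis
qed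
lemma eq_compR: assumes "EQ X Y f g" "f \<in> hom C X Y" "g \<in> hom C X Y" "k \<in> hom C X' X"
  shows "EQ X' Y (cmp C f k) (cmp C g k)"
proof -
  have "cmp C (madd C f (mneg C g)) k = madd C (cmp C f k) (mneg C (cmp C g k))"
    using distr[OF assms(4) assms(2) neg_hom[OF assms(3)]] comp_negl[OF assms(4,3)] by simp
  thus ?thesis using ft_compR[OF _ assms(4)] assms(1) unfolding eqW_def by metis
qed
lemma iso_refl: "isoW C W Y Y"
  unfolding isoW_def using eq_refl[OF id_hom] by (metis id_hom id_r)

lemma genA: assumes "f \<in> hom C L Y" "g \<in> hom C Y L" "EQ L L (cmp C g f) (idm C L)"
  "NT N" "\<phi> \<in> hom C L N" "cmp C \<phi> g = mzero C Y N" shows "\<phi> = mzero C L N"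
proof -
  have gf: "cmp C g f \<in> hom C L L" using assms by auto
  have "FT L N (cmp C \<phi> (madd C (cmp C g f) (mneg C (idm C L))))"
    using ft_compL assms(3,5) unfolding eqW_def by blast
  moreover have "cmp C \<phi> (madd C (cmp C g f) (mneg C (idm C L))) = mneg C \<phi>"
  proof -
    have "cmp C \<phi> (madd C (cmp C g f) (mneg C (idm C L))) = madd C (cmp C \<phi> (cmp C g f)) (mneg C \<phi>)"
      using distl[OF gf neg_hom[OF id_hom] assms(5)] comp_negr[OF id_hom assms(5)] assms(5) by simp
    also have "cmp C \<phi> (cmp C g f) = mzero C L N" using assoc[OF assms(1,2,5)] assms by simp
    finally show ?thesis using assms(5) by simp
  qed
  ultimately have "mneg C \<phi> = mzero C L N" using ft_NT[OF assms(4)] by metis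
  thus ?thesis using neg_neg[OF assms(5)] by (metis neg_zero)
qed
lemma genB: assumes "f \<in> hom C R Y" "g \<in> hom C Y R" "EQ R R (cmp C g f) (idm C R)"
  "NS N" "k \<in> hom C N R" "cmp C f k = mzero C N Y" shows "k = mzero C N R"
proof -
  have gf: "cmp C g f \<in> hom C R R" using assms by auto
  have "FT N R (cmp C (madd C (cmp C g f) (mneg C (idm C R))) k)"
    using ft_compR assms(3,5) unfolding eqW_def by blast
  moreover have "cmp C (madd C (cmp C g f) (mneg C (idm C R))) k = mneg C k"
  proof -
    have "cmp C (madd C (cmp C g f) (mneg C (idm C R))) k = madd C (cmp C (cmp C g f) k) (mneg C k)"
      using distr[OF assms(5) gf neg_hom[OF id_hom]] comp_negl[OF assms(5) id_hom] assms(5) by simp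
    also have "cmp C (cmp C g f) k = mzero C N R" using assoc[OF assms(5,1,2)] assms by simp
    finally show ?thesis using assms(5) by simp
  qed
  ultimately have "mneg C k = mzero C N R" using ft_NS[OF assms(4)] by metis
  thus ?thesis using neg_neg[OF assms(5)] by (metis neg_zero)
qed


lemma A1: assumes "\<exists>Y\<in>U. isoW C W L Y" shows "L \<in> U"
proof -
  obtain Y f g where y: "Y \<in> U" "f \<in> hom C L Y" "g \<in> hom C Y L" "EQ L L (cmp C g f) (idm C L)"
    using assms unfolding isoW_def by blast
  show ?thesis
  proof (rule UCHAR, intro ballI)
    fix V0 \<phi> assume v: "V0 \<in> V" and ph: "\<phi> \<in> hom C L (shO C V0)"
    show "\<phi> = mzero C L (shO C V0)"
      using genA[OF y(2,3,4) NT_V[OF v] ph] HV1[OF y(1) v comp_hom[OF y(3) ph]] by blast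
  qed
qed

lemma B1: assumes H: "reflection C W (Cplus C S T U V) L R eta"
  and z: "\<exists>Z. zero_obj C Z \<and> isoW C W R Z" shows "L \<in> U"
proof -
  obtain Z f g where y: "zero_obj C Z" "f \<in> hom C R Z" "g \<in> hom C Z R" "EQ R R (cmp C g f) (idm C R)"
    using z unfolding isoW_def by blast
  have "f = mzero C R Z" using zero_to y by blast
  hence "cmp C g f = mzero C R R" using comp_0r[OF y(3)] by simp
  hence fti: "FT R R (mneg C (idm C R))" using y(4) unfolding eqW_def by simp
  have eta: "eta \<in> hom C L R" using H unfolding reflection_def by blast
  show ?thesis
  proof (rule UCHAR, intro ballI)
    fix V0 \<phi> assume v: "V0 \<in> V" and ph: "\<phi> \<in> hom C L (shO C V0)"
    obtain \<psi> where ps: "\<psi> \<in> hom C R (shO C V0)" "EQ L (shO C V0) (cmp C \<psi> eta) \<phi>"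
      using H V_Cplus[OF v] ph unfolding reflection_def by blast
    have "FT R (shO C V0) (cmp C \<psi> (mneg C (idm C R)))" using ft_compL[OF fti ps(1)] .
    hence "FT R (shO C V0) (mneg C \<psi>)" using comp_negr[OF id_hom ps(1)] ps(1) by simp
    hence "mneg C \<psi> = mzero C R (shO C V0)" using ft_NT[OF NT_V[OF v]] by blast
    hence "\<psi> = mzero C R (shO C V0)" using neg_neg[OF ps(1)] by (metis neg_zero)
    hence "cmp C \<psi> eta = mzero C L (shO C V0)" using comp_0l[OF eta] by simp
    thus "\<phi> = mzero C L (shO C V0)" using eq_NT[OF NT_V[OF v] ps(2)] ph by simp
  qed
qed

lemma B2: assumes H: "reflection C W (Cplus C S T U V) L R eta" and LU: "L \<in> U"
  shows "\<exists>Z. zero_obj C Z \<and> isoW C W R Z"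
proof -
  have RC: "R \<in> Cplus C S T U V" and eta: "eta \<in> hom C L R" using H unfolding reflection_def by blast+
  obtain W1 V1 w r k where t: "W1 \<in> W" "V1 \<in> V" "dtri C W1 R (shO C V1) w r k"
    using RC unfolding Cplus_def star_def shift_up_def by blast
  have w: "w \<in> hom C W1 R" and r: "r \<in> hom C R (shO C V1)" using typed[OF t(3)] by auto
  have "cmp C r eta = mzero C L (shO C V1)" using HV1[OF LU t(2) comp_hom[OF eta r]] .
  then obtain \<sigma> where sg: "\<sigma> \<in> hom C L W1" "eta = cmp C w \<sigma>" using exc[OF t(3) eta] by blast
  obtain \<psi> where ps: "\<psi> \<in> hom C R W1" "EQ L W1 (cmp C \<psi> eta) \<sigma>"
    using H W_Cplus[OF t(1)] sg(1) unfolding reflection_def by blast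
  have "EQ L R (cmp C w (cmp C \<psi> eta)) (cmp C w \<sigma>)"
    using eq_compL[OF ps(2) comp_hom[OF eta ps(1)] sg(1) w] .
  moreover have "cmp C w (cmp C \<psi> eta) = cmp C (cmp C w \<psi>) eta" using assoc[OF eta ps(1) w] .
  moreover have "cmp C w \<sigma> = cmp C (idm C R) eta" using sg eta by simp
  ultimately have "EQ L R (cmp C (cmp C w \<psi>) eta) (cmp C (idm C R) eta)" by simp
  hence e1: "EQ R R (cmp C w \<psi>) (idm C R)"
    using H RC comp_hom[OF ps(1) w] id_hom unfolding reflection_def by blast
  have wp: "cmp C w \<psi> \<in> hom C R R" using ps(1) w by auto
  have "FT R R (madd C (mneg C (cmp C w \<psi>)) (madd C (cmp C w \<psi>) (mneg C (idm C R))))"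
    using ft_add[OF ft_neg[OF ft_intro[OF t(1) ps(1) w]]] e1 unfolding eqW_def by blast
  moreover have "madd C (mneg C (cmp C w \<psi>)) (madd C (cmp C w \<psi>) (mneg C (idm C R))) = mneg C (idm C R)"
    using add_assoc[OF neg_hom[OF wp] wp neg_hom[OF id_hom], symmetric] wp by simp
  ultimately have fti: "FT R R (mneg C (idm C R))" by simp
  obtain Z where z: "zero_obj C Z" using zero_exists by blast
  have "EQ R R (cmp C (mzero C Z R) (mzero C R Z)) (idm C R)" unfolding eqW_def using fti by simp
  moreover have "EQ Z Z (cmp C (mzero C R Z) (mzero C Z R)) (idm C Z)"
    using eq_refl[of "mzero C Z Z" Z Z] z unfolding zero_obj_def by simp
  ultimately have "isoW C W R Z" unfolding isoW_def using zero_hom by blast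
  thus ?thesis using z by blast
qed


lemma C1: assumes CR: "coreflection C W (Cminus C S T U V) X L eps" and LU: "L \<in> U"
  and t1: "dtri C U2 X (shO C V2) c e hh" "U2 \<in> U" "V2 \<in> V"
  and t2: "dtri C X0 X T0 a b kk" "shO C X0 \<in> S" "T0 \<in> T"
  shows "cmp C e a = mzero C X0 (shO C V2)"
proof -
  have eps: "eps \<in> hom C L X" using CR unfolding coreflection_def by blast
  have a: "a \<in> hom C X0 X" using typed[OF t2(1)] by auto
  have e: "e \<in> hom C X (shO C V2)" using typed[OF t1(1)] by auto
  obtain \<alpha> where al: "\<alpha> \<in> hom C X0 L" "EQ X0 X (cmp C eps \<alpha>) a"
    using CR S_Cminus[OF t2(2)] a unfolding coreflection_def by blast
  have "cmp C eps \<alpha> = a" using eq_NS[OF NS_S[OF t2(2)] al(2) comp_hom[OF al(1) eps] a] .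
  moreover have "cmp C e eps = mzero C L (shO C V2)" using HV1[OF LU t1(3) comp_hom[OF eps e]] .
  ultimately show ?thesis using assoc[OF al(1) eps e] comp_0l[OF al(1)] by simp
qed

lemma C2: assumes CR: "coreflection C W (Cminus C S T U V) X L eps"
  and t1: "dtri C U2 X (shO C V2) c e hh" "U2 \<in> U" "V2 \<in> V"
  and t2: "dtri C X0 X T0 a b kk" "shO C X0 \<in> S" "T0 \<in> T"
  and ea: "cmp C e a = mzero C X0 (shO C V2)"
  shows "L \<in> U"
proof -
  have LC: "L \<in> Cminus C S T U V" and eps: "eps \<in> hom C L X" using CR unfolding coreflection_def by blast+
  have a: "a \<in> hom C X0 X" and b: "b \<in> hom C X T0" using typed[OF t2(1)] by auto
  have c: "c \<in> hom C U2 X" and e: "e \<in> hom C X (shO C V2)" using typed[OF t1(1)] by auto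
  obtain X6 W6 t q k6 where l: "shO C X6 \<in> S" "W6 \<in> W" "dtri C X6 L W6 t q k6"
    using LC unfolding Cminus_def star_def shift_down_def by blast
  have t: "t \<in> hom C X6 L" and q: "q \<in> hom C L W6" using typed[OF l(3)] by auto
  have et: "cmp C eps t \<in> hom C X6 X" using t eps by auto
  have "cmp C b (cmp C eps t) = mzero C X6 T0" using HV3[OF l(1) t2(3) comp_hom[OF et b]] .
  then obtain \<zeta> where z: "\<zeta> \<in> hom C X6 X0" "cmp C eps t = cmp C a \<zeta>" using exc[OF t2(1) et] by blast
  have "cmp C (cmp C e eps) t = cmp C e (cmp C a \<zeta>)" using assoc[OF t eps e] z by simp
  also have "\<dots> = mzero C X6 (shO C V2)" using assoc[OF z(1) a e] ea comp_0l[OF z(1)] by simp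
  finally have "cmp C (cmp C e eps) t = mzero C X6 (shO C V2)" .
  then obtain \<xi> where xi: "\<xi> \<in> hom C W6 (shO C V2)" "cmp C e eps = cmp C \<xi> q"
    using exk[OF l(3) comp_hom[OF eps e]] by blast
  have "\<xi> = mzero C W6 (shO C V2)" using HV1[OF WU[OF l(2)] t1(3) xi(1)] .
  hence "cmp C e eps = mzero C L (shO C V2)" using xi(2) comp_0l[OF q] by simp
  then obtain lm where lam: "lm \<in> hom C L U2" "eps = cmp C c lm" using exc[OF t1(1) eps] by blast
  obtain \<mu> where mu: "\<mu> \<in> hom C U2 L" "EQ U2 X (cmp C eps \<mu>) c"
    using CR U_Cminus[OF t1(2)] c unfolding coreflection_def by blast
  have "EQ L X (cmp C (cmp C eps \<mu>) lm) (cmp C c lm)"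
    using eq_compR[OF mu(2) comp_hom[OF mu(1) eps] c lam(1)] .
  moreover have "cmp C (cmp C eps \<mu>) lm = cmp C eps (cmp C \<mu> lm)" using assoc[OF lam(1) mu(1) eps] by simp
  moreover have "cmp C c lm = cmp C eps (idm C L)" using lam eps by simp
  ultimately have "EQ L X (cmp C eps (cmp C \<mu> lm)) (cmp C eps (idm C L))" by simp
  hence e1: "EQ L L (cmp C \<mu> lm) (idm C L)"
    using CR LC comp_hom[OF lam(1) mu(1)] id_hom unfolding coreflection_def by blast
  show ?thesis
  proof (rule UCHAR, intro ballI)
    fix V0 \<phi> assume v: "V0 \<in> V" and ph: "\<phi> \<in> hom C L (shO C V0)"
    show "\<phi> = mzero C L (shO C V0)"
      using genA[OF lam(1) mu(1) e1 NT_V[OF v] ph] HV1[OF t1(2) v comp_hom[OF mu(1) ph]] by blast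
  qed
qed

lemma D1: assumes RF: "reflection C W (Cplus C S T U V) X R' eta'"
  and y: "\<exists>Y\<in>T. isoW C W R' Y"
  and t1: "dtri C U2 X (shO C V2) c e hh" "U2 \<in> U" "V2 \<in> V"
  and t2: "dtri C X0 X T0 a b kk" "shO C X0 \<in> S" "T0 \<in> T"
  shows "cmp C e a = mzero C X0 (shO C V2)"
proof -
  obtain Y f g where yy: "Y \<in> T" "f \<in> hom C R' Y" "g \<in> hom C Y R'" "EQ R' R' (cmp C g f) (idm C R')"
    using y unfolding isoW_def by blast
  have eta: "eta' \<in> hom C X R'" using RF unfolding reflection_def by blast
  have a: "a \<in> hom C X0 X" using typed[OF t2(1)] by auto
  have e: "e \<in> hom C X (shO C V2)" using typed[OF t1(1)] by auto
  obtain \<psi> where ps: "\<psi> \<in> hom C R' (shO C V2)" "EQ X (shO C V2) (cmp C \<psi> eta') e"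
    using RF V_Cplus[OF t1(3)] e unfolding reflection_def by blast
  have pe: "cmp C \<psi> eta' = e" using eq_NT[OF NT_V[OF t1(3)] ps(2) comp_hom[OF eta ps(1)] e] .
  have ea: "cmp C eta' a \<in> hom C X0 R'" using a eta by auto
  have "cmp C eta' a = mzero C X0 R'"
    using genB[OF yy(2,3,4) NS_S[OF t2(2)] ea] HV3[OF t2(2) yy(1) comp_hom[OF ea yy(2)]] by blast
  thus ?thesis using pe assoc[OF a eta ps(1)] comp_0r[OF ps(1)] by simp
qed

lemma D2: assumes RF: "reflection C W (Cplus C S T U V) X R' eta'"
  and t1: "dtri C U2 X (shO C V2) c e hh" "U2 \<in> U" "V2 \<in> V"
  and t2: "dtri C X0 X T0 a b kk" "shO C X0 \<in> S" "T0 \<in> T"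
  and ea: "cmp C e a = mzero C X0 (shO C V2)"
  shows "R' \<in> T"
proof -
  have RC: "R' \<in> Cplus C S T U V" and eta: "eta' \<in> hom C X R'" using RF unfolding reflection_def by blast+
  have a: "a \<in> hom C X0 X" and b: "b \<in> hom C X T0" using typed[OF t2(1)] by auto
  have c: "c \<in> hom C U2 X" and e: "e \<in> hom C X (shO C V2)" using typed[OF t1(1)] by auto
  obtain W1 V1 w r k1 where t: "W1 \<in> W" "V1 \<in> V" "dtri C W1 R' (shO C V1) w r k1"
    using RC unfolding Cplus_def star_def shift_up_def by blast
  have w: "w \<in> hom C W1 R'" and r: "r \<in> hom C R' (shO C V1)" using typed[OF t(3)] by auto
  have re: "cmp C r eta' \<in> hom C X (shO C V1)" using eta r by auto
  have "cmp C (cmp C r eta') c = mzero C U2 (shO C V1)" using HV1[OF t1(2) t(2) comp_hom[OF c re]] .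
  then obtain \<zeta> where z: "\<zeta> \<in> hom C (shO C V2) (shO C V1)" "cmp C r eta' = cmp C \<zeta> e"
    using exk[OF t1(1) re] by blast
  have ea': "cmp C eta' a \<in> hom C X0 R'" using a eta by auto
  have "cmp C r (cmp C eta' a) = cmp C (cmp C \<zeta> e) a" using assoc[OF a eta r] z by simp
  also have "\<dots> = mzero C X0 (shO C V1)" using assoc[OF a e z(1)] ea comp_0r[OF z(1)] by simp
  finally have "cmp C r (cmp C eta' a) = mzero C X0 (shO C V1)" .
  then obtain \<xi> where xi: "\<xi> \<in> hom C X0 W1" "cmp C eta' a = cmp C w \<xi>" using exc[OF t(3) ea'] by blast
  have "\<xi> = mzero C X0 W1" using HV3[OF t2(2) WT[OF t(1)] xi(1)] .
  hence "cmp C eta' a = mzero C X0 R'" using xi(2) comp_0r[OF w] by simp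
  then obtain lm where lam: "lm \<in> hom C T0 R'" "eta' = cmp C lm b" using exk[OF t2(1) eta] by blast
  obtain \<mu> where mu: "\<mu> \<in> hom C R' T0" "EQ X T0 (cmp C \<mu> eta') b"
    using RF T_Cplus[OF t2(3)] b unfolding reflection_def by blast
  have "EQ X R' (cmp C lm (cmp C \<mu> eta')) (cmp C lm b)"
    using eq_compL[OF mu(2) comp_hom[OF eta mu(1)] b lam(1)] .
  moreover have "cmp C lm (cmp C \<mu> eta') = cmp C (cmp C lm \<mu>) eta'" using assoc[OF eta mu(1) lam(1)] .
  moreover have "cmp C lm b = cmp C (idm C R') eta'" using lam eta by simp
  ultimately have "EQ X R' (cmp C (cmp C lm \<mu>) eta') (cmp C (idm C R') eta')" by simp
  hence e1: "EQ R' R' (cmp C lm \<mu>) (idm C R')"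
    using RF RC comp_hom[OF mu(1) lam(1)] id_hom unfolding reflection_def by blast
  show ?thesis
  proof (rule TCHAR, intro allI impI ballI)
    fix X7 k assume x: "shO C X7 \<in> S" and k: "k \<in> hom C X7 R'"
    show "k = mzero C X7 R'"
      using genB[OF mu(1) lam(1) e1 NS_S[OF x] k] HV3[OF x t2(3) comp_hom[OF k mu(1)]] by blast
  qed
qed

lemma main:
  assumes tau_minus: "coreflection C W (Cminus C S T U V) X L eps"
    and H: "reflection C W (Cplus C S T U V) L R eta"
    and tau_plus: "reflection C W (Cplus C S T U V) X R' eta'"
  shows "((\<exists>Z. zero_obj C Z \<and> isoW C W R Z) \<longleftrightarrow> (\<exists>Y\<in>U. isoW C W L Y))
       \<and> ((\<exists>Y\<in>U. isoW C W L Y) \<longleftrightarrow> (\<exists>Y\<in>T. isoW C W R' Y))"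
proof -
  obtain U2 V2 c e hh where t1: "U2 \<in> U" "V2 \<in> V" "dtri C U2 X (shO C V2) c e hh" using UV_tri by blast
  obtain X0 T0 a b kk where t2: "shO C X0 \<in> S" "T0 \<in> T" "dtri C X0 X T0 a b kk" using ST_tri by blast
  have i2: "(\<exists>Y\<in>U. isoW C W L Y) \<longleftrightarrow> L \<in> U" using A1 iso_refl by blast
  have i1: "(\<exists>Z. zero_obj C Z \<and> isoW C W R Z) \<longleftrightarrow> L \<in> U" using B1[OF H] B2[OF H] by blast
  have i3: "L \<in> U \<longleftrightarrow> cmp C e a = mzero C X0 (shO C V2)"
    using C1[OF tau_minus _ t1(3) t1(1,2) t2(3) t2(1,2)] C2[OF tau_minus t1(3) t1(1,2) t2(3) t2(1,2)] by blast
  have i4: "(\<exists>Y\<in>T. isoW C W R' Y) \<longleftrightarrow> cmp C e a = mzero C X0 (shO C V2)"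
    using D1[OF tau_plus _ t1(3) t1(1,2) t2(3) t2(1,2)] D2[OF tau_plus t1(3) t1(1,2) t2(3) t2(1,2)] iso_refl
    by blast
  show ?thesis using i1 i2 i3 i4 by blast
qed

end

theorem proposition2p17:
  fixes C :: "('o, 'm) tricat" and S T U V :: "'o set"
    and X L R R' :: 'o and eps eta eta' :: 'm
  assumes "triangulated C"
    and "twin_cotorsion_pair C S T U V"
    and tau_minus: "coreflection C (Wcl S T U V) (Cminus C S T U V) X L eps"
    and H: "reflection C (Wcl S T U V) (Cplus C S T U V) L R eta"
    and tau_plus: "reflection C (Wcl S T U V) (Cplus C S T U V) X R' eta'"
  shows "((\<exists>Z. zero_obj C Z \<and> isoW C (Wcl S T U V) R Z)
            \<longleftrightarrow> (\<exists>Y\<in>U. isoW C (Wcl S T U V) L Y))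
       \<and> ((\<exists>Y\<in>U. isoW C (Wcl S T U V) L Y)
            \<longleftrightarrow> (\<exists>Y\<in>T. isoW C (Wcl S T U V) R' Y))"
proof -
  interpret TW C S T U V using assms(1,2) by (unfold_locales)
  show ?thesis using main[OF tau_minus H tau_plus] .
qed

end
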